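(* In the toy model (see context), let $S=\sum_{i=0}^{L-1}[\![\Delta\alpha_i]\!]$, $\omega_i=\Delta\alpha_i-[\![\Delta\alpha_i]\!]$, let $\sigma$ be the permutation of $\{0,\dots,L-1\}$ with $\omega_{\sigma(0)}<\omega_{\sigma(1)}<\dots<\omega_{\sigma(L-1)}$, and let $k^+$ be as defined in the context. Then the maximum $z^+_{\max}=\max_i z^+_i$ of the rescaled well coordinates of the threshold configuration is $$z^+_{\max}=\begin{cases}\omega_{\sigma(S)}+1 & S\ge0,\ k^+\ne\sigma(S),\\ \omega_{\sigma(S-1)}+1 & S>0,\ k^+=\sigma(S),\\ \omega_{\sigma(L-1)} & S=0,\ k^+=\sigma(0),\\ \omega_{\sigma(L-|S|)} & S<0,\ k^+\ne\sigma(L-|S|),\\ \omega_{\sigma(L-|S|-1)} & S<0,\ k^+=\sigma(L-|S|),\end{cases}$$ and the threshold force is $F_{\mathrm{th}}=\lambda\left(\tfrac12-\eta z^+_{\max}\right)$.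
   Context: Toy model: $L$ sites with periodic boundary conditions (indices mod $L$); disorder $\alpha_0,\dots,\alpha_{L-1}$ i.i.d. uniform on $(-\tfrac12,\tfrac12)$, extended periodically; $\lambda>0$ and $\eta=\frac{2}{2+\lambda+\sqrt{\lambda^2+4\lambda}}$; $\Delta x_i=x_{i-1}-2x_i+x_{i+1}$ (periodic); $[\![x]\!]$ is the integer nearest to $x$. A configuration $\vec m\in\mathbb Z^L$ has well coordinates at force $0$ given by $\tilde y_i=\eta z_i$ with rescaled well coordinates $z_i=\Delta m_i+\Delta\alpha_i$. The threshold configuration $\vec m^+$ (a.s. unique up to adding a common integer) attains $\min_{\vec m}\max_i z_i$; $z^+_i$ are its rescaled well coordinates. The threshold force is $F_{\mathrm{th}}=\lambda(\tfrac12-\min_{\vec m}\max_i\tilde y_i)$. The index $k^+$: define $\vec J$ by $J_i=1$ for the $S+1$ indices with smallest $\omega_i$ (others $0$) if $S\ge0$, and $J_i=-1$ for the $|S|-1$ indices with largest $\omega_i$ (others $0$) if $S<0$; then $k^+\in\{0,\dots,L-1\}$, $k^+\equiv\sum_{i=0}^{L-1}i(-[\![\Delta\alpha_i]\!]+J_i)\pmod L$. *)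

theory Defs
  imports "HOL-Probability.Probability"
begin

text \<open>Toy model on L sites with periodic boundary conditions.  Site-indexed
  quantities are functions on nat; only indices i < L are used and indices
  are reduced mod L.\<close>

definition lap :: "nat \<Rightarrow> (nat \<Rightarrow> 'a::ring_1) \<Rightarrow> nat \<Rightarrow> 'a" where
  "lap L x i = x ((i + L - 1) mod L) - 2 * x (i mod L) + x ((i + 1) mod L)"

definition nint :: "real \<Rightarrow> int" where
  "nint x = \<lfloor>x + 1/2\<rfloor>"

definition eta :: "real \<Rightarrow> real" where
  "eta lam = 2 / (2 + lam + sqrt (lam\<^sup>2 + 4 * lam))"

definition zc :: "nat \<Rightarrow> (nat \<Rightarrow> real) \<Rightarrow> (nat \<Rightarrow> int) \<Rightarrow> nat \<Rightarrow> real" where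
  "zc L \<alpha> m i = real_of_int (lap L m i) + lap L \<alpha> i"

text \<open>z^+_max = max_i z^+_i, where the threshold configuration m^+ attains
  min_m max_i z_i\<close>
definition zplus_max :: "nat \<Rightarrow> (nat \<Rightarrow> real) \<Rightarrow> real" where
  "zplus_max L \<alpha> = (INF m\<in>UNIV. Max ((\<lambda>i. zc L \<alpha> m i) ` {..<L}))"

definition Fth :: "real \<Rightarrow> nat \<Rightarrow> (nat \<Rightarrow> real) \<Rightarrow> real" where
  "Fth lam L \<alpha> = lam * (1/2 - (INF m\<in>UNIV. Max ((\<lambda>i. eta lam * zc L \<alpha> m i) ` {..<L})))"

definition Ssum :: "nat \<Rightarrow> (nat \<Rightarrow> real) \<Rightarrow> int" where
  "Ssum L \<alpha> = (\<Sum>i<L. nint (lap L \<alpha> i))"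

definition omega :: "nat \<Rightarrow> (nat \<Rightarrow> real) \<Rightarrow> nat \<Rightarrow> real" where
  "omega L \<alpha> i = lap L \<alpha> i - real_of_int (nint (lap L \<alpha> i))"

definition Jvec :: "nat \<Rightarrow> (nat \<Rightarrow> real) \<Rightarrow> (nat \<Rightarrow> nat) \<Rightarrow> nat \<Rightarrow> int" where
  "Jvec L \<alpha> \<sigma> i =
     (let S = Ssum L \<alpha> in
      if S \<ge> 0 then (if i \<in> \<sigma> ` {..nat S} then 1 else 0)
      else (if i \<in> \<sigma> ` {L - (nat \<bar>S\<bar> - 1)..<L} then -1 else 0))"

definition kplus :: "nat \<Rightarrow> (nat \<Rightarrow> real) \<Rightarrow> (nat \<Rightarrow> nat) \<Rightarrow> nat" where
  "kplus L \<alpha> \<sigma> =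
     nat ((\<Sum>i<L. int i * (- nint (lap L \<alpha> i) + Jvec L \<alpha> \<sigma> i)) mod int L)"

definition disorder :: "nat \<Rightarrow> (nat \<Rightarrow> real) measure" where
  "disorder L = PiM {..<L} (\<lambda>_. uniform_measure lborel {-1/2<..<1/2})"

end

theory Submission imports Defs begin

lemma sumP1:
  "(\<Sum>i<Suc n. h i (x ((i + Suc n - 1) mod Suc n))) = h 0 (x n) + (\<Sum>i<n. h (Suc i) (x i))"
proof -
  have "\<And>i. i < n \<Longrightarrow> (i + Suc n) mod Suc n = i" by (simp only: mod_add_self2) simp
  moreover have "\<And>i. i < n \<Longrightarrow> Suc i + Suc n - 1 = i + Suc n" by simp
  ultimately have "\<And>i. i < n \<Longrightarrow> (Suc i + Suc n - 1) mod Suc n = i" by simp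
  thus ?thesis by (subst sum.lessThan_Suc_shift) (auto intro!: sum.cong)
qed

lemma sumP2:
  "(\<Sum>i<Suc n. h i (x ((i + 1) mod Suc n))) = (\<Sum>i<n. h i (x (Suc i))) + h n (x 0)"
  by (subst sum.lessThan_Suc) (auto intro!: sum.cong)

lemma sumP3:
  "(\<Sum>i<Suc n. h i (x (i mod Suc n))) = (\<Sum>i<Suc n. h i (x i))"
  by (auto intro!: sum.cong)

lemma lap_sum0:
  fixes x :: "nat \<Rightarrow> 'a::ring_1"
  assumes "L \<ge> 1"
  shows "(\<Sum>i<L. lap L x i) = 0"
proof -
  obtain n where L: "L = Suc n" using assms by (cases L) auto
  have "(\<Sum>i<L. lap L x i) = (\<Sum>i<Suc n. x ((i + Suc n - 1) mod Suc n)) - 2 * (\<Sum>i<Suc n. x (i mod Suc n)) + (\<Sum>i<Suc n. x ((i + 1) mod Suc n))"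
    unfolding lap_def L by (simp add: sum.distrib sum_subtractf sum_distrib_left)
  also have "\<dots> = 0"
  proof -
    have a: "(\<Sum>i<Suc n. x ((i + Suc n - 1) mod Suc n)) = (\<Sum>i<Suc n. x i)"
      using sumP1[of "\<lambda>i y. y" x n] by (simp add: sum.lessThan_Suc)
    have b: "(\<Sum>i<Suc n. x ((i + 1) mod Suc n)) = (\<Sum>i<Suc n. x i)"
      using sumP2[of "\<lambda>i y. y" x n] by (simp only: sum.lessThan_Suc_shift) simp
    have c: "(\<Sum>i<Suc n. x (i mod Suc n)) = (\<Sum>i<Suc n. x i)"
      using sumP3[of "\<lambda>i y. y" x n] by simp
    show ?thesis unfolding a b c by (simp add: algebra_simps mult_2)
  qed
  finally show ?thesis .
qed

lemma lap_wsum: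
  fixes m :: "nat \<Rightarrow> int"
  assumes "L \<ge> 1"
  shows "(\<Sum>i<L. int i * lap L m i) = int L * (m 0 - m (L - 1))"
proof -
  obtain n where L: "L = Suc n" using assms by (cases L) auto
  have "(\<Sum>i<L. int i * lap L m i) = (\<Sum>i<Suc n. int i * m ((i + Suc n - 1) mod Suc n)) - 2 * (\<Sum>i<Suc n. int i * m (i mod Suc n)) + (\<Sum>i<Suc n. int i * m ((i + 1) mod Suc n))"
    unfolding lap_def L by (simp add: sum.distrib sum_subtractf sum_distrib_left algebra_simps)
  also have "\<dots> = (\<Sum>i<n. int (Suc i) * m i) - 2 * (\<Sum>i<Suc n. int i * m i) + ((\<Sum>i<n. int i * m (Suc i)) + int n * m 0)"
    using sumP1[of "\<lambda>i y. int i * y" m n] sumP2[of "\<lambda>i y. int i * y" m n] sumP3[of "\<lambda>i y. int i * y" m n]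
    by simp
  also have "\<dots> = int L * (m 0 - m (L - 1))"
  proof -
    have e1: "(\<Sum>i<n. int (Suc i) * m i) = (\<Sum>i<Suc n. int i * m i) + (\<Sum>i<Suc n. m i) - int (Suc n) * m n"
      by (simp add: sum.lessThan_Suc sum.distrib algebra_simps)
    have e2: "(\<Sum>i<n. int i * m (Suc i)) = (\<Sum>i<Suc n. int i * m i) - (\<Sum>i<Suc n. m i) + m 0"
    proof -
      have "(\<Sum>i<Suc n. (int i - 1) * m i) = - m 0 + (\<Sum>i<n. int i * m (Suc i))"
        by (subst sum.lessThan_Suc_shift) simp
      thus ?thesis by (simp add: algebra_simps sum_subtractf)
    qed
    show ?thesis unfolding e1 e2 L by (simp add: algebra_simps)
  qed
  finally show ?thesis .
qed

lemma dsum: "(\<Sum>t<N. \<Sum>j\<le>t. (u::nat\<Rightarrow>int) j) = (\<Sum>j<N. (int N - int j) * u j)"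
proof (induction N)
  case 0 then show ?case by simp
next
  case (Suc N)
  have "(\<Sum>t<Suc N. \<Sum>j\<le>t. u j) = (\<Sum>j<N. (int N - int j) * u j) + (\<Sum>j<Suc N. u j)"
    by (subst sum.lessThan_Suc) (simp add: Suc.IH lessThan_Suc_atMost)
  also have "\<dots> = (\<Sum>j<Suc N. (int (Suc N) - int j) * u j)"
    by (simp add: sum.distrib[symmetric] algebra_simps)
  finally show ?case .
qed

lemma lap_surj:
  fixes u :: "nat \<Rightarrow> int"
  assumes L1: "L \<ge> 1" and s0: "(\<Sum>i<L. u i) = 0" and dv: "int L dvd (\<Sum>i<L. int i * u i)"
  shows "\<exists>m. \<forall>i<L. lap L m i = u i"
proof -
  obtain n where L: "L = Suc n" using L1 by (cases L) auto
  define c where "c = (\<Sum>i<L. int i * u i) div int L"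
  have Lc: "int L * c = (\<Sum>i<L. int i * u i)" using dv unfolding c_def by simp
  define D where "D t = c + (\<Sum>j\<le>t. u j)" for t
  define m where "m t = (\<Sum>s<t. D s)" for t
  have m0: "m 0 = 0" by (simp add: m_def)
  have mS: "m (Suc t) = m t + D t" for t by (simp add: m_def)
  have DS: "D (Suc t) = D t + u (Suc t)" for t by (simp add: D_def)
  have mL: "m L = 0"
  proof -
    have "m L = int L * c + (\<Sum>t<L. \<Sum>j\<le>t. u j)" by (simp add: m_def D_def sum.distrib)
    also have "\<dots> = int L * c + (\<Sum>j<L. (int L - int j) * u j)" by (simp add: dsum)
    also have "\<dots> = int L * c + int L * (\<Sum>j<L. u j) - (\<Sum>j<L. int j * u j)"
      by (simp add: algebra_simps sum_subtractf sum_distrib_left)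
    finally show ?thesis using Lc s0 by simp
  qed
  have Dn: "D n = c" using s0 unfolding D_def L by (simp add: lessThan_Suc_atMost)
  have "lap L m i = u i" if i: "i < L" for i
  proof (cases "n = 0")
    case True
    then have "i = 0" "L = 1" using i L by auto
    then show ?thesis using s0 by (simp add: lap_def)
  next
    case n: False
    show ?thesis
    proof (cases "i = 0")
      case True
      have "lap L m i = m n - 2 * m 0 + m 1" using True n unfolding lap_def L by simp
      also have "\<dots> = u i" using mS[of n] mS[of 0] mL Dn m0 True unfolding L by (simp add: D_def)
      finally show ?thesis .
    next
      case i0: False
      show ?thesis
      proof (cases "i = n")
        case True
        obtain p where p: "n = Suc p" using n by (cases n) auto
        have e: "i + L - 1 = p + L" using True p L by simp
        have "(i + L - 1) mod L = p" unfolding e mod_add_self2 using True p L by simp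
        then have "lap L m i = m p - 2 * m n + m 0" using True unfolding lap_def using L p by simp
        also have "\<dots> = u i" using mS[of n] mS[of p] mL Dn m0 True DS[of p] unfolding L p by simp
        finally show ?thesis .
      next
        case False
        then have iin: "i < n" using i L by simp
        obtain p where p: "i = Suc p" using i0 by (cases i) auto
        have e: "i + L - 1 = p + L" using p L by simp
        have "(i + L - 1) mod L = p" unfolding e mod_add_self2 using iin p L by simp
        then have "lap L m i = m p - 2 * m i + m (Suc i)" using iin unfolding lap_def using L p by simp
        also have "\<dots> = u i" using mS[of i] mS[of p] DS[of p] unfolding p by simp
        finally show ?thesis .
      qed
    qed
  qed
  then show ?thesis by blast
qed

lemma omega_bounds: "- 1/2 \<le> omega L \<alpha> i \<and> omega L \<alpha> i < 1/2"
  unfolding omega_def nint_def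
  using floor_correct[of "lap L \<alpha> i + 1/2"] by linarith

lemma inf_min:
  fixes F :: "'b \<Rightarrow> real"
  assumes "\<And>m. V \<le> F m" "F m0 = V"
  shows "(INF m\<in>UNIV. F m) = V"
proof (rule cInf_eq_minimum)
  show "V \<in> range F" using assms(2) by (metis rangeI)
  show "\<And>x. x \<in> range F \<Longrightarrow> V \<le> x" using assms(1) by auto
qed

locale toy =
  fixes L :: nat and \<alpha> :: "nat \<Rightarrow> real" and \<sigma> :: "nat \<Rightarrow> nat"
  assumes L1: "L \<ge> 1" and perm: "\<sigma> permutes {..<L}"
    and sorted: "\<forall>j<L. \<forall>j'<L. j < j' \<longrightarrow> omega L \<alpha> (\<sigma> j) < omega L \<alpha> (\<sigma> j')"
begin

abbreviation "nn i \<equiv> nint (lap L \<alpha> i)"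
abbreviation "ww \<equiv> omega L \<alpha>"
abbreviation "SS \<equiv> Ssum L \<alpha>"
abbreviation "kk \<equiv> kplus L \<alpha> \<sigma>"
abbreviation "JJ \<equiv> Jvec L \<alpha> \<sigma>"

lemma sig_lt: "j < L \<Longrightarrow> \<sigma> j < L"
  using permutes_in_image[OF perm] by auto

lemma sig_inj: "inj \<sigma>" using permutes_inj[OF perm] .

lemma sig_eq: "\<sigma> x = \<sigma> y \<longleftrightarrow> x = y" using sig_inj by (auto dest: injD)

lemma sig_mem: "\<sigma> j \<in> \<sigma> ` A \<longleftrightarrow> j \<in> A" using sig_inj by (simp add: inj_image_mem_iff)

lemma sig_surj: "i < L \<Longrightarrow> \<exists>j<L. \<sigma> j = i"
  using permutes_image[OF perm] by (metis imageE lessThan_iff)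

lemma mono_le: assumes "j \<le> j'" "j' < L" shows "ww (\<sigma> j) \<le> ww (\<sigma> j')"
proof (cases "j = j'")
  case False
  then have "j < j'" using \<open>j \<le> j'\<close> by simp
  then show ?thesis using sorted \<open>j' < L\<close> by (meson less_imp_le order.strict_trans)
qed simp

lemma wdiff: "ww i < ww i' + 1" using omega_bounds[of L \<alpha> i] omega_bounds[of L \<alpha> i'] by linarith

lemma sum_w: "(\<Sum>i<L. ww i) = - real_of_int SS"
proof -
  have "(\<Sum>i<L. ww i) = (\<Sum>i<L. lap L \<alpha> i) - (\<Sum>i<L. real_of_int (nn i))"
    unfolding omega_def by (simp add: sum_subtractf)
  also have "\<dots> = - real_of_int SS" using lap_sum0[OF L1] unfolding Ssum_def by simp
  finally show ?thesis .
qed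

lemma S_bounds: "2 * SS \<le> int L" "- 2 * SS < int L"
proof -
  have "(\<Sum>i<L. (-1/2::real)) \<le> (\<Sum>i<L. ww i)" by (rule sum_mono) (use omega_bounds in auto)
  then have "- real L / 2 \<le> - real_of_int SS" using sum_w by simp
  then show "2 * SS \<le> int L" by linarith
  have "(\<Sum>i<L. ww i) < (\<Sum>i<L. (1/2::real))"
    by (rule sum_strict_mono) (use omega_bounds L1 in \<open>auto simp: lessThan_empty_iff\<close>)
  then have "- real_of_int SS < real L / 2" using sum_w by simp
  then show "- 2 * SS < int L" by linarith
qed

lemma card_img: "card (\<sigma> ` A) = card A"
  using sig_inj by (simp add: card_image inj_on_subset)

lemma ind_sum: "A \<subseteq> {..<L} \<Longrightarrow> (\<Sum>i<L. (if i \<in> A then c else 0)) = (c::int) * int (card A)"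
  by (simp add: sum.If_cases Int_absorb1 Int_absorb2)

lemma wind_sum: "A \<subseteq> {..<L} \<Longrightarrow> (\<Sum>i<L. int i * (if i \<in> A then c else 0)) = (c::int) * (\<Sum>i\<in>A. int i)"
proof -
  assume "A \<subseteq> {..<L}"
  then have "(\<Sum>i<L. int i * (if i \<in> A then c else 0)) = (\<Sum>i<L. (if i \<in> A then c * int i else 0))"
    by (intro sum.cong) auto
  also have "\<dots> = (\<Sum>i\<in>A. c * int i)" using \<open>A \<subseteq> {..<L}\<close>
    by (simp add: sum.If_cases Int_absorb1 Int_absorb2)
  finally show ?thesis by (simp add: sum_distrib_left)
qed

lemma img_sub: "B \<subseteq> {..<L} \<Longrightarrow> \<sigma> ` B \<subseteq> {..<L}" using sig_lt by auto

lemma kk_lt: "kk < L"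
proof -
  have "(\<Sum>i<L. int i * (- nn i + JJ i)) mod int L < int L" using L1 by simp
  then show ?thesis unfolding kplus_def using L1 by (simp add: nat_less_iff)
qed

lemma pin:
  fixes v :: "nat \<Rightarrow> int"
  assumes v: "\<forall>i<L. v i = JJ i - (if i = p then 1 else 0)" and p: "p < L"
    and c: "(\<Sum>i<L. int i * v i) = int L * q + (\<Sum>i<L. int i * nn i)"
  shows "kk = p"
proof -
  have "(\<Sum>i<L. int i * v i) = (\<Sum>i<L. int i * JJ i - (if i = p then int i else 0))"
  proof (intro sum.cong refl)
    fix i assume "i \<in> {..<L}"
    then have h: "v i = JJ i - (if i = p then 1 else 0)" using v by simp
    show "int i * v i = int i * JJ i - (if i = p then int i else 0)" unfolding h by (simp add: right_diff_distrib)
  qed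
  also have "\<dots> = (\<Sum>i<L. int i * JJ i) - int p" using p by (simp add: sum_subtractf)
  finally have e: "(\<Sum>i<L. int i * v i) = (\<Sum>i<L. int i * JJ i) - int p" .
  have "(\<Sum>i<L. int i * (- nn i + JJ i)) = (\<Sum>i<L. int i * JJ i) - (\<Sum>i<L. int i * nn i)"
    by (simp add: algebra_simps sum_subtractf)
  also have "\<dots> = int p + int L * q" using e c by simp
  finally have "(\<Sum>i<L. int i * (- nn i + JJ i)) mod int L = int p" using p by simp
  then show ?thesis unfolding kplus_def by simp
qed


lemma lt_int: "real_of_int x < real_of_int c + 1 \<Longrightarrow> x \<le> (c::int)"
proof -
  assume "real_of_int x < real_of_int c + 1"
  then have "real_of_int x < real_of_int (c + 1)" by simp
  then have "x < c + 1" by (simp only: of_int_less_iff)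
  then show ?thesis by simp
qed

lemma J_pos: "SS \<ge> 0 \<Longrightarrow> JJ i = (if i \<in> \<sigma> ` {..nat SS} then 1 else 0)"
  unfolding Jvec_def Let_def by simp

lemma a_bounds: "SS < 0 \<Longrightarrow> 1 \<le> nat \<bar>SS\<bar> \<and> nat \<bar>SS\<bar> + 1 \<le> L"
  using S_bounds by linarith

lemma J_neg: "SS < 0 \<Longrightarrow> JJ i = (if i \<in> \<sigma> ` {L - nat \<bar>SS\<bar> + 1..<L} then -1 else 0)"
proof -
  assume "SS < 0"
  then have "L - (nat \<bar>SS\<bar> - 1) = L - nat \<bar>SS\<bar> + 1" using a_bounds by linarith
  then show ?thesis unfolding Jvec_def Let_def using \<open>SS < 0\<close> by simp
qed

lemma s_lt: "SS \<ge> 0 \<Longrightarrow> nat SS < L" using S_bounds L1 by linarith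

lemma eq_from_le:
  fixes v b :: "nat \<Rightarrow> int"
  assumes "\<forall>i<L. v i \<le> b i" "(\<Sum>i<L. v i) = (\<Sum>i<L. b i)"
  shows "\<forall>i<L. v i = b i"
proof (rule ccontr)
  assume "\<not> (\<forall>i<L. v i = b i)"
  then obtain i where "i < L" "v i < b i" using assms(1) by (meson order.not_eq_order_implies_strict)
  then have "(\<Sum>i<L. v i) < (\<Sum>i<L. b i)"
    using assms(1) by (intro sum_strict_mono_ex1) auto
  then show False using assms(2) by simp
qed

context
  fixes v :: "nat \<Rightarrow> int" and q :: int
  assumes vs: "(\<Sum>i<L. v i) = SS"
    and vc: "(\<Sum>i<L. int i * v i) = int L * q + (\<Sum>i<L. int i * nn i)"
begin

lemma lowA:
  assumes S0: "SS \<ge> 0" and kn: "kk \<noteq> \<sigma> (nat SS)"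
  shows "\<exists>i<L. ww (\<sigma> (nat SS)) + 1 \<le> real_of_int (v i) + ww i"
proof (rule ccontr)
  assume "\<not> ?thesis"
  then have H: "\<forall>i<L. real_of_int (v i) + ww i < ww (\<sigma> (nat SS)) + 1" by force
  define s where "s = nat SS"
  have sL: "s < L" using s_lt S0 s_def by simp
  define b where "b i = (if i \<in> \<sigma> ` {..<s} then 1 else (0::int))" for i
  have vb: "\<forall>i<L. v i \<le> b i"
  proof (intro allI impI)
    fix i assume i: "i < L"
    obtain j where j: "j < L" "\<sigma> j = i" using sig_surj[OF i] by blast
    show "v i \<le> b i"
    proof (cases "j < s")
      case True
      have "real_of_int (v i) < real_of_int 1 + 1" using H[rule_format, OF i] wdiff[of "\<sigma> s" i] s_def by simp
      then show ?thesis using lt_int True unfolding b_def j(2)[symmetric] sig_mem by auto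
    next
      case False
      have "ww (\<sigma> s) \<le> ww i" using mono_le[of s j] False j by simp
      then have "real_of_int (v i) < real_of_int 0 + 1" using H[rule_format, OF i] s_def by simp
      then show ?thesis using lt_int False unfolding b_def j(2)[symmetric] sig_mem by auto
    qed
  qed
  have "(\<Sum>i<L. b i) = int s" unfolding b_def
    using ind_sum[of "\<sigma> ` {..<s}" 1] img_sub[of "{..<s}"] sL card_img by simp
  then have "\<forall>i<L. v i = b i" using eq_from_le[OF vb] vs s_def S0 by simp
  moreover have "\<forall>i<L. b i = JJ i - (if i = \<sigma> s then 1 else 0)"
    using J_pos[OF S0] unfolding b_def s_def[symmetric] by (auto simp: sig_eq)
  ultimately have "kk = \<sigma> s" using pin[of v "\<sigma> s" q] vc sig_lt[OF sL] by simp
  then show False using kn s_def by simp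
qed


lemma lowB:
  assumes S0: "SS > 0"
  shows "\<exists>i<L. ww (\<sigma> (nat SS - 1)) + 1 \<le> real_of_int (v i) + ww i"
proof (rule ccontr)
  assume "\<not> ?thesis"
  then have H: "\<forall>i<L. real_of_int (v i) + ww i < ww (\<sigma> (nat SS - 1)) + 1" by force
  define s where "s = nat SS"
  have sL: "s < L" using s_lt S0 s_def by simp
  have s1: "s \<ge> 1" using S0 s_def by simp
  define b where "b i = (if i \<in> \<sigma> ` {..<s-1} then 1 else (0::int))" for i
  have vb: "\<forall>i<L. v i \<le> b i"
  proof (intro allI impI)
    fix i assume i: "i < L"
    obtain j where j: "j < L" "\<sigma> j = i" using sig_surj[OF i] by blast
    show "v i \<le> b i"
    proof (cases "j < s - 1")
      case True
      have "real_of_int (v i) < real_of_int 1 + 1" using H[rule_format, OF i] wdiff[of "\<sigma> (s-1)" i] s_def by simp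
      then show ?thesis using lt_int True unfolding b_def j(2)[symmetric] sig_mem by auto
    next
      case False
      have "ww (\<sigma> (s-1)) \<le> ww i" using mono_le[of "s-1" j] False j by simp
      then have "real_of_int (v i) < real_of_int 0 + 1" using H[rule_format, OF i] s_def by simp
      then show ?thesis using lt_int False unfolding b_def j(2)[symmetric] sig_mem by auto
    qed
  qed
  have "(\<Sum>i<L. b i) = int (s - 1)" unfolding b_def
    using ind_sum[of "\<sigma> ` {..<s-1}" 1] img_sub[of "{..<s-1}"] sL card_img by simp
  moreover have "(\<Sum>i<L. v i) \<le> (\<Sum>i<L. b i)" using vb by (intro sum_mono) auto
  ultimately show False using vs s_def s1 S0 by linarith
qed

lemma lowC:
  assumes S0: "SS = 0"
  shows "\<exists>i<L. ww (\<sigma> (L - 1)) \<le> real_of_int (v i) + ww i"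
proof (rule ccontr)
  assume "\<not> ?thesis"
  then have H: "\<forall>i<L. real_of_int (v i) + ww i < ww (\<sigma> (L - 1))" by force
  have vb: "\<forall>i<L. v i \<le> 0"
  proof (intro allI impI)
    fix i assume i: "i < L"
    have "real_of_int (v i) < real_of_int 0 + 1" using H[rule_format, OF i] wdiff[of "\<sigma> (L-1)" i] by simp
    then show "v i \<le> 0" using lt_int by blast
  qed
  have Lm: "L - 1 < L" using L1 by simp
  have "real_of_int (v (\<sigma> (L-1))) < real_of_int (-1) + 1" using H[rule_format, OF sig_lt[OF Lm]] by simp
  then have "v (\<sigma> (L-1)) \<le> -1" using lt_int by blast
  then have ex: "\<exists>a\<in>{..<L}. v a < 0" using sig_lt[OF Lm] by force
  have "(\<Sum>i<L. v i) < (\<Sum>i<L. 0)"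
    using vb ex by (intro sum_strict_mono_ex1) auto
  then show False using vs S0 by simp
qed

lemma lowD:
  assumes S0: "SS < 0" and kn: "kk \<noteq> \<sigma> (L - nat \<bar>SS\<bar>)"
  shows "\<exists>i<L. ww (\<sigma> (L - nat \<bar>SS\<bar>)) \<le> real_of_int (v i) + ww i"
proof (rule ccontr)
  define a where "a = nat \<bar>SS\<bar>"
  assume "\<not> ?thesis"
  then have H: "\<forall>i<L. real_of_int (v i) + ww i < ww (\<sigma> (L - a))" unfolding a_def by force
  have ab: "1 \<le> a" "a + 1 \<le> L" using a_bounds[OF S0] a_def by auto
  have pL: "L - a < L" using ab by simp
  define b where "b i = (if i \<in> \<sigma> ` {L-a..<L} then -1 else (0::int))" for i
  have vb: "\<forall>i<L. v i \<le> b i"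
  proof (intro allI impI)
    fix i assume i: "i < L"
    obtain j where j: "j < L" "\<sigma> j = i" using sig_surj[OF i] by blast
    show "v i \<le> b i"
    proof (cases "L - a \<le> j")
      case True
      have "ww (\<sigma> (L-a)) \<le> ww i" using mono_le[of "L-a" j] True j by simp
      then have "real_of_int (v i) < real_of_int (-1) + 1" using H[rule_format, OF i] by simp
      then show ?thesis using lt_int True unfolding b_def j(2)[symmetric] sig_mem by auto
    next
      case False
      have "real_of_int (v i) < real_of_int 0 + 1" using H[rule_format, OF i] wdiff[of "\<sigma> (L-a)" i] by simp
      then show ?thesis using lt_int False unfolding b_def j(2)[symmetric] sig_mem by auto
    qed
  qed
  have "(\<Sum>i<L. b i) = - int a" unfolding b_def
    using ind_sum[of "\<sigma> ` {L-a..<L}" "-1"] img_sub[of "{L-a..<L}"] card_img ab by (simp add: subset_eq)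
  then have "\<forall>i<L. v i = b i" using eq_from_le[OF vb] vs a_def S0 by simp
  moreover have "\<forall>i<L. b i = JJ i - (if i = \<sigma> (L-a) then 1 else 0)"
  proof (intro allI impI)
    fix i assume "i < L"
    show "b i = JJ i - (if i = \<sigma> (L-a) then 1 else 0)"
      using J_neg[OF S0, of i] ab unfolding b_def a_def[symmetric]
      by (cases "i = \<sigma> (L-a)") (auto simp: sig_eq sig_mem image_iff)
  qed
  ultimately have "kk = \<sigma> (L-a)" using pin[of v "\<sigma> (L-a)" q] vc sig_lt[OF pL] by simp
  then show False using kn a_def by simp
qed

lemma lowE:
  assumes S0: "SS < 0"
  shows "\<exists>i<L. ww (\<sigma> (L - nat \<bar>SS\<bar> - 1)) \<le> real_of_int (v i) + ww i"
proof (rule ccontr)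
  define a where "a = nat \<bar>SS\<bar>"
  assume "\<not> ?thesis"
  then have H: "\<forall>i<L. real_of_int (v i) + ww i < ww (\<sigma> (L - a - 1))" unfolding a_def by force
  have ab: "1 \<le> a" "a + 1 \<le> L" using a_bounds[OF S0] a_def by auto
  define b where "b i = (if i \<in> \<sigma> ` {L-a-1..<L} then -1 else (0::int))" for i
  have vb: "\<forall>i<L. v i \<le> b i"
  proof (intro allI impI)
    fix i assume i: "i < L"
    obtain j where j: "j < L" "\<sigma> j = i" using sig_surj[OF i] by blast
    show "v i \<le> b i"
    proof (cases "L - a - 1 \<le> j")
      case True
      have "ww (\<sigma> (L-a-1)) \<le> ww i" using mono_le[of "L-a-1" j] True j by simp
      then have "real_of_int (v i) < real_of_int (-1) + 1" using H[rule_format, OF i] by simp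
      then show ?thesis using lt_int True unfolding b_def j(2)[symmetric] sig_mem by auto
    next
      case False
      have "real_of_int (v i) < real_of_int 0 + 1" using H[rule_format, OF i] wdiff[of "\<sigma> (L-a-1)" i] by simp
      then show ?thesis using lt_int False unfolding b_def j(2)[symmetric] sig_mem by auto
    qed
  qed
  have "(\<Sum>i<L. b i) = - int (a + 1)" unfolding b_def
    using ind_sum[of "\<sigma> ` {L-a-1..<L}" "-1"] img_sub[of "{L-a-1..<L}"] card_img ab by (simp add: subset_eq)
  moreover have "(\<Sum>i<L. v i) \<le> (\<Sum>i<L. b i)" using vb by (intro sum_mono) auto
  ultimately show False using vs a_def S0 by linarith
qed

end


definition vs :: "nat \<Rightarrow> int" where "vs i = JJ i - (if i = kk then 1 else 0)"

lemma JJ_sum: "(\<Sum>i<L. JJ i) = SS + 1"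
proof (cases "SS \<ge> 0")
  case True
  have "(\<Sum>i<L. JJ i) = (\<Sum>i<L. if i \<in> \<sigma> ` {..nat SS} then 1 else 0)" using J_pos[OF True] by simp
  also have "\<dots> = int (nat SS + 1)"
    using ind_sum[of "\<sigma> ` {..nat SS}" 1] img_sub[of "{..nat SS}"] s_lt[OF True] card_img
    by (simp add: subset_eq)
  finally show ?thesis using True by simp
next
  case False
  then have S0: "SS < 0" by simp
  have ab: "1 \<le> nat \<bar>SS\<bar>" "nat \<bar>SS\<bar> + 1 \<le> L" using a_bounds[OF S0] by auto
  have "(\<Sum>i<L. JJ i) = (\<Sum>i<L. if i \<in> \<sigma> ` {L - nat \<bar>SS\<bar> + 1..<L} then -1 else 0)" using J_neg[OF S0] by simp
  also have "\<dots> = - int (nat \<bar>SS\<bar> - 1)"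
    using ind_sum[of "\<sigma> ` {L - nat \<bar>SS\<bar> + 1..<L}" "-1"] img_sub[of "{L - nat \<bar>SS\<bar> + 1..<L}"] card_img ab
    by (simp add: subset_eq)
  finally show ?thesis using S0 ab by simp
qed

lemma exists_m: "\<exists>m. \<forall>i<L. zc L \<alpha> m i = real_of_int (vs i) + ww i"
proof -
  define u where "u i = vs i - nn i" for i
  have "(\<Sum>i<L. u i) = (\<Sum>i<L. JJ i) - 1 - SS"
    unfolding u_def vs_def Ssum_def using kk_lt by (simp add: sum_subtractf)
  then have s0: "(\<Sum>i<L. u i) = 0" using JJ_sum by simp
  define Y where "Y = (\<Sum>i<L. int i * (- nn i + JJ i))"
  have kY: "int kk = Y mod int L" unfolding kplus_def Y_def using L1 by simp
  have "(\<Sum>i<L. int i * u i) = (\<Sum>i<L. int i * (- nn i + JJ i) - (if i = kk then int i else 0))"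
    unfolding u_def vs_def by (intro sum.cong) (auto simp: algebra_simps)
  also have "\<dots> = Y - int kk" unfolding Y_def using kk_lt by (simp add: sum_subtractf)
  also have "\<dots> = int L * (Y div int L)" using kY by (simp add: minus_mod_eq_mult_div)
  finally have dv: "int L dvd (\<Sum>i<L. int i * u i)" by simp
  obtain m where m: "\<forall>i<L. lap L m i = u i" using lap_surj[OF L1 s0 dv] by blast
  show ?thesis
    by (rule exI[of _ m]) (auto simp: zc_def m u_def omega_def)
qed


lemma w_half: "ww i - 1 < ww i'" using omega_bounds[of L \<alpha> i] omega_bounds[of L \<alpha> i'] by linarith
lemma w_lt_half: "ww i < ww i' + 1" using wdiff .

lemma upA:
  assumes S0: "SS \<ge> 0" and kn: "kk \<noteq> \<sigma> (nat SS)"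
  shows "(\<forall>i<L. real_of_int (vs i) + ww i \<le> ww (\<sigma> (nat SS)) + 1) \<and>
         (\<exists>i<L. real_of_int (vs i) + ww i = ww (\<sigma> (nat SS)) + 1)"
proof
  define s where "s = nat SS"
  have sL: "s < L" using s_lt S0 s_def by simp
  show "\<forall>i<L. real_of_int (vs i) + ww i \<le> ww (\<sigma> (nat SS)) + 1"
  proof (intro allI impI)
    fix i assume i: "i < L"
    obtain j where j: "j < L" "\<sigma> j = i" using sig_surj[OF i] by blast
    show "real_of_int (vs i) + ww i \<le> ww (\<sigma> (nat SS)) + 1"
    proof (cases "j \<le> s")
      case True
      have "vs i \<le> 1" unfolding vs_def J_pos[OF S0] by auto
      moreover have "ww i \<le> ww (\<sigma> s)" using mono_le[of j s] True sL j by simp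
      ultimately show ?thesis unfolding s_def by linarith
    next
      case False
      have "vs i \<le> 0" unfolding vs_def J_pos[OF S0] j(2)[symmetric] sig_mem s_def[symmetric] using False by auto
      then show ?thesis using wdiff[of i "\<sigma> (nat SS)"] by linarith
    qed
  qed
  have "vs (\<sigma> s) = 1" unfolding vs_def J_pos[OF S0] sig_mem s_def using kn by auto
  then show "\<exists>i<L. real_of_int (vs i) + ww i = ww (\<sigma> (nat SS)) + 1"
    using sig_lt[OF sL] s_def by force
qed

lemma upB:
  assumes S0: "SS > 0" and kn: "kk = \<sigma> (nat SS)"
  shows "(\<forall>i<L. real_of_int (vs i) + ww i \<le> ww (\<sigma> (nat SS - 1)) + 1) \<and>
         (\<exists>i<L. real_of_int (vs i) + ww i = ww (\<sigma> (nat SS - 1)) + 1)"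
proof
  define s where "s = nat SS"
  have sL: "s < L" using s_lt S0 s_def by simp
  have s1: "s \<ge> 1" using S0 s_def by simp
  have S0': "SS \<ge> 0" using S0 by simp
  show "\<forall>i<L. real_of_int (vs i) + ww i \<le> ww (\<sigma> (nat SS - 1)) + 1"
  proof (intro allI impI)
    fix i assume i: "i < L"
    obtain j where j: "j < L" "\<sigma> j = i" using sig_surj[OF i] by blast
    show "real_of_int (vs i) + ww i \<le> ww (\<sigma> (nat SS - 1)) + 1"
    proof (cases "j < s")
      case True
      have "vs i \<le> 1" unfolding vs_def J_pos[OF S0'] by auto
      moreover have "ww i \<le> ww (\<sigma> (s - 1))" using mono_le[of j "s-1"] True sL j by simp
      ultimately show ?thesis unfolding s_def by linarith
    next
      case False
      have "vs i \<le> 0" unfolding vs_def J_pos[OF S0'] j(2)[symmetric] sig_mem kn s_def[symmetric] sig_eq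
        using False by auto
      then show ?thesis using wdiff[of i "\<sigma> (nat SS - 1)"] by linarith
    qed
  qed
  have "vs (\<sigma> (s-1)) = 1" unfolding vs_def J_pos[OF S0'] sig_mem kn s_def[symmetric] sig_eq using s1 by auto
  then show "\<exists>i<L. real_of_int (vs i) + ww i = ww (\<sigma> (nat SS - 1)) + 1"
    using sig_lt[of "s-1"] sL s_def by force
qed

lemma upC:
  assumes S0: "SS = 0" and kn: "kk = \<sigma> 0"
  shows "(\<forall>i<L. real_of_int (vs i) + ww i \<le> ww (\<sigma> (L - 1))) \<and>
         (\<exists>i<L. real_of_int (vs i) + ww i = ww (\<sigma> (L - 1)))"
proof -
  have S0': "SS \<ge> 0" using S0 by simp
  have v0: "vs i = 0" for i unfolding vs_def J_pos[OF S0'] kn using S0 by auto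
  have Lm: "L - 1 < L" using L1 by simp
  have "\<forall>i<L. ww i \<le> ww (\<sigma> (L - 1))"
  proof (intro allI impI)
    fix i assume i: "i < L"
    obtain j where j: "j < L" "\<sigma> j = i" using sig_surj[OF i] by blast
    show "ww i \<le> ww (\<sigma> (L - 1))" using mono_le[of j "L-1"] j Lm by simp
  qed
  then show ?thesis using v0 sig_lt[OF Lm] by force
qed

lemma upD:
  assumes S0: "SS < 0" and kn: "kk \<noteq> \<sigma> (L - nat \<bar>SS\<bar>)"
  shows "(\<forall>i<L. real_of_int (vs i) + ww i \<le> ww (\<sigma> (L - nat \<bar>SS\<bar>))) \<and>
         (\<exists>i<L. real_of_int (vs i) + ww i = ww (\<sigma> (L - nat \<bar>SS\<bar>)))"
proof
  define a where "a = nat \<bar>SS\<bar>"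
  have ab: "1 \<le> a" "a + 1 \<le> L" using a_bounds[OF S0] a_def by auto
  have pL: "L - a < L" using ab by simp
  show "\<forall>i<L. real_of_int (vs i) + ww i \<le> ww (\<sigma> (L - nat \<bar>SS\<bar>))"
  proof (intro allI impI)
    fix i assume i: "i < L"
    obtain j where j: "j < L" "\<sigma> j = i" using sig_surj[OF i] by blast
    show "real_of_int (vs i) + ww i \<le> ww (\<sigma> (L - nat \<bar>SS\<bar>))"
    proof (cases "j \<le> L - a")
      case True
      have "vs i \<le> 0" unfolding vs_def J_neg[OF S0] by auto
      moreover have "ww i \<le> ww (\<sigma> (L - a))" using mono_le[of j "L-a"] True pL j by simp
      ultimately show ?thesis unfolding a_def by linarith
    next
      case False
      have "vs i \<le> -1" unfolding vs_def J_neg[OF S0] j(2)[symmetric] sig_mem a_def[symmetric]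
        using False j ab by auto
      then show ?thesis using w_half[of i "\<sigma> (L - nat \<bar>SS\<bar>)"] by linarith
    qed
  qed
  have "vs (\<sigma> (L-a)) = 0" unfolding vs_def J_neg[OF S0] sig_mem a_def[symmetric] using kn a_def by auto
  then show "\<exists>i<L. real_of_int (vs i) + ww i = ww (\<sigma> (L - nat \<bar>SS\<bar>))"
    using sig_lt[OF pL] a_def by force
qed

lemma upE:
  assumes S0: "SS < 0" and kn: "kk = \<sigma> (L - nat \<bar>SS\<bar>)"
  shows "(\<forall>i<L. real_of_int (vs i) + ww i \<le> ww (\<sigma> (L - nat \<bar>SS\<bar> - 1))) \<and>
         (\<exists>i<L. real_of_int (vs i) + ww i = ww (\<sigma> (L - nat \<bar>SS\<bar> - 1)))"
proof
  define a where "a = nat \<bar>SS\<bar>"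
  have ab: "1 \<le> a" "a + 1 \<le> L" using a_bounds[OF S0] a_def by auto
  have pL: "L - a - 1 < L" using ab by simp
  show "\<forall>i<L. real_of_int (vs i) + ww i \<le> ww (\<sigma> (L - nat \<bar>SS\<bar> - 1))"
  proof (intro allI impI)
    fix i assume i: "i < L"
    obtain j where j: "j < L" "\<sigma> j = i" using sig_surj[OF i] by blast
    show "real_of_int (vs i) + ww i \<le> ww (\<sigma> (L - nat \<bar>SS\<bar> - 1))"
    proof (cases "j < L - a")
      case True
      have "vs i \<le> 0" unfolding vs_def J_neg[OF S0] by auto
      moreover have "ww i \<le> ww (\<sigma> (L - a - 1))" using mono_le[of j "L-a-1"] True pL j by simp
      ultimately show ?thesis unfolding a_def by linarith
    next
      case False
      have "vs i \<le> -1" unfolding vs_def J_neg[OF S0] j(2)[symmetric] sig_mem a_def[symmetric] kn sig_eq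
        using False j ab by auto
      then show ?thesis using w_half[of i "\<sigma> (L - nat \<bar>SS\<bar> - 1)"] by linarith
    qed
  qed
  have "vs (\<sigma> (L-a-1)) = 0" unfolding vs_def J_neg[OF S0] sig_mem a_def[symmetric] kn sig_eq using ab by auto
  then show "\<exists>i<L. real_of_int (vs i) + ww i = ww (\<sigma> (L - nat \<bar>SS\<bar> - 1))"
    using sig_lt[OF pL] a_def by force
qed


abbreviation "vall \<equiv> (if SS \<ge> 0 \<and> kk \<noteq> \<sigma> (nat SS) then ww (\<sigma> (nat SS)) + 1
           else if SS > 0 \<and> kk = \<sigma> (nat SS) then ww (\<sigma> (nat SS - 1)) + 1
           else if SS = 0 \<and> kk = \<sigma> 0 then ww (\<sigma> (L - 1))
           else if SS < 0 \<and> kk \<noteq> \<sigma> (L - nat \<bar>SS\<bar>) then ww (\<sigma> (L - nat \<bar>SS\<bar>))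
           else ww (\<sigma> (L - nat \<bar>SS\<bar> - 1)))"

lemma up_all: "(\<forall>i<L. real_of_int (vs i) + ww i \<le> vall) \<and> (\<exists>i<L. real_of_int (vs i) + ww i = vall)"
proof -
  consider (A) "SS \<ge> 0 \<and> kk \<noteq> \<sigma> (nat SS)" | (B) "\<not> (SS \<ge> 0 \<and> kk \<noteq> \<sigma> (nat SS))" "SS > 0 \<and> kk = \<sigma> (nat SS)"
    | (C) "\<not> (SS \<ge> 0 \<and> kk \<noteq> \<sigma> (nat SS))" "\<not> (SS > 0 \<and> kk = \<sigma> (nat SS))" "SS = 0 \<and> kk = \<sigma> 0"
    | (D) "SS < 0 \<and> kk \<noteq> \<sigma> (L - nat \<bar>SS\<bar>)"
    | (E) "SS < 0 \<and> kk = \<sigma> (L - nat \<bar>SS\<bar>)"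
    by force
  then show ?thesis
  proof cases
    case A then show ?thesis using upA by simp
  next
    case B then show ?thesis using upB by simp
  next
    case C then show ?thesis using upC by simp
  next
    case D
    then have d1: "SS < 0" and d2: "kk \<noteq> \<sigma> (L - nat \<bar>SS\<bar>)" by auto
    have "nat \<bar>SS\<bar> = nat (- SS)" using d1 by simp
    then show ?thesis using upD[OF d1 d2] d1 d2 by simp
  next
    case E
    then have d1: "SS < 0" and d2: "kk = \<sigma> (L - nat \<bar>SS\<bar>)" by auto
    have "nat \<bar>SS\<bar> = nat (- SS)" using d1 by simp
    then show ?thesis using upE[OF d1 d2] d1 d2 by simp
  qed
qed

lemma low_all:
  fixes v :: "nat \<Rightarrow> int" and q :: int
  assumes vs: "(\<Sum>i<L. v i) = SS"
    and vc: "(\<Sum>i<L. int i * v i) = int L * q + (\<Sum>i<L. int i * nn i)"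
  shows "\<exists>i<L. vall \<le> real_of_int (v i) + ww i"
proof -
  consider (A) "SS \<ge> 0 \<and> kk \<noteq> \<sigma> (nat SS)" | (B) "\<not> (SS \<ge> 0 \<and> kk \<noteq> \<sigma> (nat SS))" "SS > 0 \<and> kk = \<sigma> (nat SS)"
    | (C) "\<not> (SS \<ge> 0 \<and> kk \<noteq> \<sigma> (nat SS))" "\<not> (SS > 0 \<and> kk = \<sigma> (nat SS))" "SS = 0 \<and> kk = \<sigma> 0"
    | (D) "SS < 0 \<and> kk \<noteq> \<sigma> (L - nat \<bar>SS\<bar>)"
    | (E) "SS < 0 \<and> kk = \<sigma> (L - nat \<bar>SS\<bar>)"
    by force
  then show ?thesis
  proof cases
    case A then show ?thesis using lowA[OF vs vc] by simp
  next
    case B then show ?thesis using lowB[OF vs vc] by simp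
  next
    case C then show ?thesis using lowC[OF vs vc] by simp
  next
    case D
    then have d1: "SS < 0" and d2: "kk \<noteq> \<sigma> (L - nat \<bar>SS\<bar>)" by auto
    have "nat \<bar>SS\<bar> = nat (- SS)" using d1 by simp
    then show ?thesis using lowD[OF vs vc d1 d2] d1 d2 by simp
  next
    case E
    then have d1: "SS < 0" and d2: "kk = \<sigma> (L - nat \<bar>SS\<bar>)" by auto
    have "nat \<bar>SS\<bar> = nat (- SS)" using d1 by simp
    then show ?thesis using lowE[OF vs vc d1] d1 d2 by simp
  qed
qed

lemma main_z: "zplus_max L \<alpha> = vall" and main_F: "\<forall>c\<ge>0. (INF m\<in>UNIV. Max ((\<lambda>i. c * zc L \<alpha> m i) ` {..<L})) = c * vall"
proof -
  define F where "F m = Max ((\<lambda>i. zc L \<alpha> m i) ` {..<L})" for m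
  have "0 \<in> {..<L}" using L1 by simp
  then have ne: "{..<L} \<noteq> {}" by blast
  obtain m0 where m0: "\<forall>i<L. zc L \<alpha> m0 i = real_of_int (vs i) + ww i" using exists_m by blast
  have Fm0: "F m0 = vall"
  proof -
    have H1: "\<forall>i<L. real_of_int (vs i) + ww i \<le> vall" and H2: "\<exists>i<L. real_of_int (vs i) + ww i = vall"
      using up_all by blast+
    obtain i0 where i0: "i0 < L" "real_of_int (vs i0) + ww i0 = vall" using H2 by blast
    show ?thesis unfolding F_def
    proof (rule Max_eqI)
      show "finite ((\<lambda>i. zc L \<alpha> m0 i) ` {..<L})" by simp
      show "y \<le> vall" if "y \<in> (\<lambda>i. zc L \<alpha> m0 i) ` {..<L}" for y
        using that H1 m0 by auto
      have z1: "zc L \<alpha> m0 i0 = real_of_int (vs i0) + ww i0" using m0 i0(1) by blast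
      have z0: "vall = zc L \<alpha> m0 i0" using trans[OF z1 i0(2)] by (rule sym)
      show "vall \<in> (\<lambda>i. zc L \<alpha> m0 i) ` {..<L}"
        by (rule image_eqI[where f="\<lambda>i. zc L \<alpha> m0 i" and x=i0, OF z0]) (simp add: i0(1))
    qed
  qed
  have Fge: "vall \<le> F m" for m
  proof -
    define v where "v i = lap L m i + nn i" for i
    have "(\<Sum>i<L. v i) = SS" unfolding v_def Ssum_def using lap_sum0[OF L1, of m] by (simp add: sum.distrib)
    moreover have "(\<Sum>i<L. int i * v i) = int L * (m 0 - m (L - 1)) + (\<Sum>i<L. int i * nn i)"
      unfolding v_def using lap_wsum[OF L1, of m] by (simp add: sum.distrib algebra_simps)
    ultimately obtain i where i: "i < L" "vall \<le> real_of_int (v i) + ww i" using low_all by blast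
    have "real_of_int (v i) + ww i = zc L \<alpha> m i" unfolding v_def zc_def omega_def by simp
    also have "\<dots> \<le> F m" unfolding F_def using i by (intro Max_ge) auto
    finally show ?thesis using i by simp
  qed
  show "zplus_max L \<alpha> = vall" unfolding zplus_max_def F_def[symmetric]
    by (rule inf_min[where F=F, OF Fge Fm0])
  show "\<forall>c\<ge>0. (INF m\<in>UNIV. Max ((\<lambda>i. c * zc L \<alpha> m i) ` {..<L})) = c * vall"
  proof (intro allI impI)
    fix c :: real assume c: "c \<ge> 0"
    have eq: "Max ((\<lambda>i. c * zc L \<alpha> m i) ` {..<L}) = c * F m" for m
    proof -
      have "mono (\<lambda>x. c * x)" using c by (simp add: mono_def mult_left_mono)
      then have "c * F m = Max ((\<lambda>x. c * x) ` ((\<lambda>i. zc L \<alpha> m i) ` {..<L}))"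
        unfolding F_def using ne by (intro mono_Max_commute) auto
      then show ?thesis by (simp add: image_image)
    qed
    show "(INF m\<in>UNIV. Max ((\<lambda>i. c * zc L \<alpha> m i) ` {..<L})) = c * vall"
      unfolding eq
    proof (rule inf_min[where F="\<lambda>m. c * F m"])
      show "c * vall \<le> c * F m" for m using Fge[of m] c by (rule mult_left_mono)
      show "c * F m0 = c * vall" using Fm0 by (rule arg_cong)
    qed
  qed
qed

end


lemma eta_pos: "lam > 0 \<Longrightarrow> eta lam > 0"
  unfolding eta_def by (intro divide_pos_pos) (auto intro: add_pos_nonneg)

theorem corollary1:
  fixes L :: nat and lam :: real
  assumes "L \<ge> 1" and "lam > 0"
  shows "AE \<alpha> in disorder L.
    \<forall>\<sigma>. \<sigma> permutes {..<L} \<and>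
         (\<forall>j<L. \<forall>j'<L. j < j' \<longrightarrow> omega L \<alpha> (\<sigma> j) < omega L \<alpha> (\<sigma> j')) \<longrightarrow>
      (let S = Ssum L \<alpha>; k = kplus L \<alpha> \<sigma>; w = omega L \<alpha>; a = nat \<bar>S\<bar> in
        zplus_max L \<alpha> =
          (if S \<ge> 0 \<and> k \<noteq> \<sigma> (nat S) then w (\<sigma> (nat S)) + 1
           else if S > 0 \<and> k = \<sigma> (nat S) then w (\<sigma> (nat S - 1)) + 1
           else if S = 0 \<and> k = \<sigma> 0 then w (\<sigma> (L - 1))
           else if S < 0 \<and> k \<noteq> \<sigma> (L - a) then w (\<sigma> (L - a))
           else w (\<sigma> (L - a - 1)))
        \<and> Fth lam L \<alpha> = lam * (1/2 - eta lam * zplus_max L \<alpha>))"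
proof (rule always_eventually, intro allI impI)
  fix \<alpha> :: "nat \<Rightarrow> real" and \<sigma> :: "nat \<Rightarrow> nat"
  assume h: "\<sigma> permutes {..<L} \<and>
         (\<forall>j<L. \<forall>j'<L. j < j' \<longrightarrow> omega L \<alpha> (\<sigma> j) < omega L \<alpha> (\<sigma> j'))"
  interpret toy L \<alpha> \<sigma> using assms(1) h by unfold_locales auto
  have e: "eta lam \<ge> 0" using eta_pos[OF assms(2)] by simp
  show "let S = Ssum L \<alpha>; k = kplus L \<alpha> \<sigma>; w = omega L \<alpha>; a = nat \<bar>S\<bar> in
        zplus_max L \<alpha> =
          (if S \<ge> 0 \<and> k \<noteq> \<sigma> (nat S) then w (\<sigma> (nat S)) + 1
           else if S > 0 \<and> k = \<sigma> (nat S) then w (\<sigma> (nat S - 1)) + 1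
           else if S = 0 \<and> k = \<sigma> 0 then w (\<sigma> (L - 1))
           else if S < 0 \<and> k \<noteq> \<sigma> (L - a) then w (\<sigma> (L - a))
           else w (\<sigma> (L - a - 1)))
        \<and> Fth lam L \<alpha> = lam * (1/2 - eta lam * zplus_max L \<alpha>)"
    unfolding Let_def Fth_def using main_z main_F e by simp
qed

end
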